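(* For programs $\Omega_1,\Omega_2$ with weight constraints, $\Omega_1$ is strongly equivalent to $\Omega_2$ (as programs with weight constraints) if and only if $[\Omega_1]$ is strongly equivalent to $[\Omega_2]$ (as programs with nested expressions).
   Context: Programs with nested expressions. A literal is a propositional atom $a$ or its classical negation $\neg a$; a set of literals is consistent if it contains no pair $a,\neg a$. Elementary formulas are literals, $\bot$, $\top$. Formulas are built with $\mathit{not}$, "," (conjunction) and ";" (disjunction). A rule is $\mathit{Head}\leftarrow\mathit{Body}$ with formulas; a program is a set of rules. For consistent $Z$: $Z\models l$ iff $l\in Z$; $Z\models\top$; $Z\not\models\bot$; $Z\models(F,G)$ iff both; $Z\models(F;G)$ iff at least one; $Z\models\mathit{not}\,F$ iff $Z\not\models F$; $Z$ satisfies a program if $Z\models\mathit{Body}$ implies $Z\models\mathit{Head}$ for every rule. Reduct: $F^Z=F$ for elementary $F$, commutes with "," and ";", $(\mathit{not}\,F)^Z=\bot$ if $Z\models F$, $\top$ otherwise; $\Pi^Z$ applies this to heads and bodies. $Z$ is an answer set of a $\mathit{not}$-free program if it is a minimal consistent set satisfying it, and of $\Pi$ if it is an answer set of $\Pi^Z$. Programs $\Pi_1,\Pi_2$ with nested expressions are strongly equivalent if for every program $\Pi$ with nested expressions, $\Pi_1\cup\Pi$ and $\Pi_2\cup\Pi$ have the same answer sets. $\langle F_1,\dots,F_n\rangle:X$ is the disjunction over $I\in X$ of the conjunctions of $F_i$, $i\in I$ (empty conjunction $\top$, empty disjunction $\bot$). Programs with weight constraints. A rule element is a literal $l$ (positive)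 or $\mathit{not}\,l$ (negative). A weight constraint is $L\le\{c_1=w_1,\dots,c_m=w_m\}\le U$ ($L,U$ reals or $\pm\infty$, $w_i\ge0$ reals). A rule is $C_0\leftarrow C_1,\dots,C_n$ with weight constraints; the rule elements of $C_0$ are its head elements; a program is a set of rules; a literal $c$ is identified with $1\le\{c=1\}$. $Z$ satisfies a constraint if $L\le\sum_{j:Z\models c_j}w_j\le U$, and a program if every rule whose body constraints are all satisfied has its head satisfied. $(L\le S)^Z=L^Z\le S'$, where $S'$ drops negative pairs and $L^Z$ is $L$ minus the sum of weights of negative pairs $c=w$ with $Z\models c$. The reduct of $L_0\le S_0\le U_0\leftarrow L_1\le S_1\le U_1,\dots,L_n\le S_n\le U_n$ is, if $Z\models S_i\le U_i$ for all $i\ge1$, the rules $l\leftarrow(L_1\le S_1)^Z,\dots,(L_n\le S_n)^Z$ for the positive head elements $l\in Z$; otherwise empty. $\Omega^Z$ is the union; $\mathit{cl}(\Omega^Z)$ is its unique minimal satisfying set of literals. $Z$ is an answer set of $\Omega$ if $Z\models\Omega$ and $\mathit{cl}(\Omega^Z)=Z$. $\Omega_1,\Omega_2$ are strongly equivalent if for every program $\Omega$ with weight constraints, $\Omega_1\cup\Omega$ and $\Omega_2\cup\Omega$ have the same answer sets. Translation: $[w\le S]=\langle c_1,\dots,c_m\rangle:\{I: w\le\sum_{i\in I}w_i\}$, $[w<S]=\langle c_1,\dots,c_m\rangle:\{I: w<\sum_{i\in I}w_i\}$, $[S\le U]=\mathit{not}\,[U<S]$, $[L\le S\le U]=[L\le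 S],[S\le U]$; $[\Omega]$ replaces each rule $C_0\leftarrow C_1,\dots,C_n$ by $(l_1;\mathit{not}\,l_1),\dots,(l_p;\mathit{not}\,l_p),[C_0]\leftarrow[C_1],\dots,[C_n]$, $l_1,\dots,l_p$ the positive head elements. *)

theory Defs
  imports Complex_Main "HOL-Library.Extended_Real"
begin

datatype 'a lit = Pos 'a | Neg 'a   \<comment> \<open>atom a, classical negation \<not>a\<close>

definition consistent :: "'a lit set \<Rightarrow> bool" where
  "consistent Z \<longleftrightarrow> (\<forall>a. \<not> (Pos a \<in> Z \<and> Neg a \<in> Z))"

datatype 'a form =
    FLit "'a lit" | FBot | FTop | FNot "'a form"
  | FConj "'a form" "'a form" | FDisj "'a form" "'a form"

type_synonym 'a nrule = "'a form \<times> 'a form"   \<comment> \<open>(Head, Body)\<close>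
type_synonym 'a nprog = "'a nrule set"

fun fsat :: "'a lit set \<Rightarrow> 'a form \<Rightarrow> bool" where
  "fsat Z (FLit l) = (l \<in> Z)"
| "fsat Z FBot = False"
| "fsat Z FTop = True"
| "fsat Z (FNot F) = (\<not> fsat Z F)"
| "fsat Z (FConj F G) = (fsat Z F \<and> fsat Z G)"
| "fsat Z (FDisj F G) = (fsat Z F \<or> fsat Z G)"

definition nsat :: "'a lit set \<Rightarrow> 'a nprog \<Rightarrow> bool" where
  "nsat Z \<Pi> \<longleftrightarrow> (\<forall>(H, B) \<in> \<Pi>. fsat Z B \<longrightarrow> fsat Z H)"

fun freduct :: "'a form \<Rightarrow> 'a lit set \<Rightarrow> 'a form" where
  "freduct (FLit l) Z = FLit l"
| "freduct FBot Z = FBot"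
| "freduct FTop Z = FTop"
| "freduct (FNot F) Z = (if fsat Z F then FBot else FTop)"
| "freduct (FConj F G) Z = FConj (freduct F Z) (freduct G Z)"
| "freduct (FDisj F G) Z = FDisj (freduct F Z) (freduct G Z)"

definition nreduct :: "'a nprog \<Rightarrow> 'a lit set \<Rightarrow> 'a nprog" where
  "nreduct \<Pi> Z = (\<lambda>(H, B). (freduct H Z, freduct B Z)) ` \<Pi>"

fun not_free :: "'a form \<Rightarrow> bool" where
  "not_free (FNot F) = False"
| "not_free (FConj F G) = (not_free F \<and> not_free G)"
| "not_free (FDisj F G) = (not_free F \<and> not_free G)"
| "not_free _ = True"

definition nf_answer_set :: "'a nprog \<Rightarrow> 'a lit set \<Rightarrow> bool" where
  "nf_answer_set \<Pi> Z \<longleftrightarrow> consistent Z \<and> nsat Z \<Pi> \<and>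
     (\<forall>Y. consistent Y \<and> nsat Y \<Pi> \<and> Y \<subseteq> Z \<longrightarrow> Y = Z)"

definition n_answer_set :: "'a nprog \<Rightarrow> 'a lit set \<Rightarrow> bool" where
  "n_answer_set \<Pi> Z \<longleftrightarrow> nf_answer_set (nreduct \<Pi> Z) Z"

definition n_strongly_equiv :: "'a nprog \<Rightarrow> 'a nprog \<Rightarrow> bool" where
  "n_strongly_equiv \<Pi>1 \<Pi>2 \<longleftrightarrow>
     (\<forall>\<Pi>. \<forall>Z. n_answer_set (\<Pi>1 \<union> \<Pi>) Z \<longleftrightarrow> n_answer_set (\<Pi>2 \<union> \<Pi>) Z)"

datatype 'a elem = PosE "'a lit" | NotE "'a lit"   \<comment> \<open>l  or  not l\<close>

record 'a wc =
  lower :: ereal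
  elems :: "('a elem \<times> real) list"
  upper :: ereal

type_synonym 'a wrule = "'a wc \<times> 'a wc list"   \<comment> \<open>(C0, [C1,...,Cn])\<close>
type_synonym 'a wprog = "'a wrule set"

fun esat :: "'a lit set \<Rightarrow> 'a elem \<Rightarrow> bool" where
  "esat Z (PosE l) = (l \<in> Z)"
| "esat Z (NotE l) = (l \<notin> Z)"

definition wsum :: "'a lit set \<Rightarrow> 'a wc \<Rightarrow> real" where
  "wsum Z C = sum_list (map (\<lambda>(c, w). if esat Z c then w else 0) (elems C))"

definition wcsat :: "'a lit set \<Rightarrow> 'a wc \<Rightarrow> bool" where
  "wcsat Z C \<longleftrightarrow> lower C \<le> ereal (wsum Z C) \<and> ereal (wsum Z C) \<le> upper C"

definition wsat :: "'a lit set \<Rightarrow> 'a wprog \<Rightarrow> bool" where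
  "wsat Z \<Omega> \<longleftrightarrow> (\<forall>(C0, Bs) \<in> \<Omega>. (\<forall>C \<in> set Bs. wcsat Z C) \<longrightarrow> wcsat Z C0)"

definition wc_wf :: "'a wc \<Rightarrow> bool" where
  "wc_wf C \<longleftrightarrow> (\<forall>(c, w) \<in> set (elems C). 0 \<le> w)"

definition wprog_wf :: "'a wprog \<Rightarrow> bool" where
  "wprog_wf \<Omega> \<longleftrightarrow> (\<forall>(C0, Bs) \<in> \<Omega>. wc_wf C0 \<and> (\<forall>C \<in> set Bs. wc_wf C))"

fun is_pos :: "'a elem \<Rightarrow> bool" where
  "is_pos (PosE l) = True" | "is_pos (NotE l) = False"

definition pos_lits :: "'a wc \<Rightarrow> 'a lit list" where
  "pos_lits C = [l. (PosE l, w) \<leftarrow> elems C]"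

definition lit_wc :: "'a lit \<Rightarrow> 'a wc" where
  "lit_wc l = \<lparr>lower = 1, elems = [(PosE l, 1)], upper = \<infinity>\<rparr>"

text \<open>(L \<le> S)^Z = L^Z \<le> S', represented with upper bound \<infinity>.\<close>
definition lower_reduct :: "'a wc \<Rightarrow> 'a lit set \<Rightarrow> 'a wc" where
  "lower_reduct C Z =
     \<lparr>lower = lower C - ereal (sum_list (map (\<lambda>(c, w). if \<not> is_pos c \<and> esat Z c then w else 0) (elems C))),
      elems = filter (\<lambda>(c, w). is_pos c) (elems C),
      upper = \<infinity>\<rparr>"

definition wrule_reduct :: "'a wrule \<Rightarrow> 'a lit set \<Rightarrow> 'a wprog" where
  "wrule_reduct r Z =
     (if (\<forall>C \<in> set (snd r). ereal (wsum Z C) \<le> upper C)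
      then {(lit_wc l, map (\<lambda>C. lower_reduct C Z) (snd r)) | l. l \<in> set (pos_lits (fst r)) \<and> l \<in> Z}
      else {})"

definition wreduct :: "'a wprog \<Rightarrow> 'a lit set \<Rightarrow> 'a wprog" where
  "wreduct \<Omega> Z = (\<Union>r \<in> \<Omega>. wrule_reduct r Z)"

definition cl :: "'a wprog \<Rightarrow> 'a lit set" where
  "cl \<Omega> = (THE X. wsat X \<Omega> \<and> (\<forall>Y. wsat Y \<Omega> \<longrightarrow> X \<subseteq> Y))"

definition w_answer_set :: "'a wprog \<Rightarrow> 'a lit set \<Rightarrow> bool" where
  "w_answer_set \<Omega> Z \<longleftrightarrow> consistent Z \<and> wsat Z \<Omega> \<and> cl (wreduct \<Omega> Z) = Z"

definition w_strongly_equiv :: "'a wprog \<Rightarrow> 'a wprog \<Rightarrow> bool" where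
  "w_strongly_equiv \<Omega>1 \<Omega>2 \<longleftrightarrow>
     (\<forall>\<Omega>. wprog_wf \<Omega> \<longrightarrow> (\<forall>Z. w_answer_set (\<Omega>1 \<union> \<Omega>) Z \<longleftrightarrow> w_answer_set (\<Omega>2 \<union> \<Omega>) Z))"

fun conj_list :: "'a form list \<Rightarrow> 'a form" where
  "conj_list [] = FTop"
| "conj_list [F] = F"
| "conj_list (F # Fs) = FConj F (conj_list Fs)"

fun disj_list :: "'a form list \<Rightarrow> 'a form" where
  "disj_list [] = FBot"
| "disj_list [F] = F"
| "disj_list (F # Fs) = FDisj F (disj_list Fs)"

fun elem_form :: "'a elem \<Rightarrow> 'a form" where
  "elem_form (PosE l) = FLit l"
| "elem_form (NotE l) = FNot (FLit l)"

text \<open>\<langle>F_1,...,F_m\<rangle>:X with X given by a predicate on subsets I of {0..<m}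
  (each subset enumerated once, as a strictly increasing index list).\<close>
definition angle :: "'a form list \<Rightarrow> (nat list \<Rightarrow> bool) \<Rightarrow> 'a form" where
  "angle Fs P = disj_list (map (\<lambda>I. conj_list (map (\<lambda>i. Fs ! i) I))
                                 (filter P (subseqs [0..<length Fs])))"

definition isum :: "('a elem \<times> real) list \<Rightarrow> nat list \<Rightarrow> real" where
  "isum cs I = sum_list (map (\<lambda>i. snd (cs ! i)) I)"

definition tr_ge :: "ereal \<Rightarrow> ('a elem \<times> real) list \<Rightarrow> 'a form" where
  "tr_ge w cs = angle (map (elem_form \<circ> fst) cs) (\<lambda>I. w \<le> ereal (isum cs I))"

definition tr_gt :: "ereal \<Rightarrow> ('a elem \<times> real) list \<Rightarrow> 'a form" where
  "tr_gt w cs = angle (map (elem_form \<circ> fst) cs) (\<lambda>I. w < ereal (isum cs I))"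

definition tr_wc :: "'a wc \<Rightarrow> 'a form" where
  "tr_wc C = FConj (tr_ge (lower C) (elems C)) (FNot (tr_gt (upper C) (elems C)))"

definition tr_rule :: "'a wrule \<Rightarrow> 'a nrule" where
  "tr_rule r =
     (conj_list (map (\<lambda>l. FDisj (FLit l) (FNot (FLit l))) (pos_lits (fst r)) @ [tr_wc (fst r)]),
      conj_list (map tr_wc (snd r)))"

definition tr_prog :: "'a wprog \<Rightarrow> 'a nprog" where
  "tr_prog \<Omega> = tr_rule ` \<Omega>"

end

theory Submission
  imports Defs
begin

lemma fsat_conj_list: "fsat Z (conj_list Fs) \<longleftrightarrow> (\<forall>F\<in>set Fs. fsat Z F)"
  by (induction Fs rule: conj_list.induct) auto

lemma fsat_disj_list: "fsat Z (disj_list Fs) \<longleftrightarrow> (\<exists>F\<in>set Fs. fsat Z F)"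
  by (induction Fs rule: disj_list.induct) auto

lemma freduct_conj_list: "freduct (conj_list Fs) Z = conj_list (map (\<lambda>F. freduct F Z) Fs)"
  by (induction Fs rule: conj_list.induct) auto

lemma freduct_disj_list: "freduct (disj_list Fs) Z = disj_list (map (\<lambda>F. freduct F Z) Fs)"
  by (induction Fs rule: disj_list.induct) auto

lemma fsat_freduct_self: "fsat Z (freduct F Z) \<longleftrightarrow> fsat Z F"
  by (induction F) auto

lemma subseqs_idx:
  assumes "I \<in> set (subseqs [0..<n])"
  shows "distinct I" "set I \<subseteq> {..<n}"
proof -
  show "distinct I" using subseqs_distinctD[OF assms] by simp
  have "set I \<in> set ` set (subseqs [0..<n])" using assms by blast
  then show "set I \<subseteq> {..<n}" unfolding subseqs_powset by auto
qed

lemma filter_in_subseqs: "filter P xs \<in> set (subseqs xs)"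
  by (induction xs) (auto simp: Let_def)

lemma fsat_angle:
  "fsat Y (angle Fs P) \<longleftrightarrow>
    (\<exists>I\<in>set (subseqs [0..<length Fs]). P I \<and> (\<forall>i\<in>set I. fsat Y (Fs ! i)))"
  unfolding angle_def fsat_disj_list by (auto simp: fsat_conj_list)

lemma fsat_freduct_angle:
  "fsat Y (freduct (angle Fs P) Z) \<longleftrightarrow>
    (\<exists>I\<in>set (subseqs [0..<length Fs]). P I \<and> (\<forall>i\<in>set I. fsat Y (freduct (Fs ! i) Z)))"
  unfolding angle_def freduct_disj_list fsat_disj_list
  by (auto simp: fsat_conj_list freduct_conj_list)

definition gsum :: "('b \<Rightarrow> bool) \<Rightarrow> ('b \<times> real) list \<Rightarrow> real" where
  "gsum g cs = sum_list (map (\<lambda>(c, w). if g c then w else 0) cs)"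

lemma gsum_idx: "gsum g cs = (\<Sum>i\<in>{i. i < length cs \<and> g (fst (cs ! i))}. snd (cs ! i))"
proof -
  have "gsum g cs = (\<Sum>i = 0..<length cs. (\<lambda>(c, w). if g c then w else 0) (cs ! i))"
    unfolding gsum_def by (simp add: sum_list_sum_nth)
  also have "\<dots> = (\<Sum>i\<in>{0..<length cs}. if g (fst (cs ! i)) then snd (cs ! i) else 0)"
    by (rule sum.cong) (auto split: prod.splits)
  also have "\<dots> = (\<Sum>i\<in>{i\<in>{0..<length cs}. g (fst (cs ! i))}. snd (cs ! i))"
    using sum.inter_filter[where A="{0..<length cs}" and g="\<lambda>i. snd (cs ! i)" and P="\<lambda>i. g (fst (cs ! i))"]
    by simp
  also have "{i\<in>{0..<length cs}. g (fst (cs ! i))} = {i. i < length cs \<and> g (fst (cs ! i))}" by auto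
  finally show ?thesis .
qed

lemma isum_set: "distinct I \<Longrightarrow> isum cs I = (\<Sum>i\<in>set I. snd (cs ! i))"
  unfolding isum_def by (simp add: sum_list_distinct_conv_sum_set)

lemma core:
  assumes wf: "\<forall>(c, w)\<in>set cs. 0 \<le> w"
    and Q: "\<And>a b. Q a \<Longrightarrow> a \<le> b \<Longrightarrow> Q b"
  shows "(\<exists>I\<in>set (subseqs [0..<length cs]). Q (isum cs I) \<and> (\<forall>i\<in>set I. g (fst (cs ! i))))
         \<longleftrightarrow> Q (gsum g cs)"
proof
  assume "\<exists>I\<in>set (subseqs [0..<length cs]). Q (isum cs I) \<and> (\<forall>i\<in>set I. g (fst (cs ! i)))"
  then obtain I where I: "I \<in> set (subseqs [0..<length cs])" "Q (isum cs I)"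
    "\<forall>i\<in>set I. g (fst (cs ! i))" by blast
  have d: "distinct I" and s: "set I \<subseteq> {..<length cs}" using subseqs_idx[OF I(1)] by auto
  have "isum cs I = (\<Sum>i\<in>set I. snd (cs ! i))" using isum_set[OF d] .
  also have "\<dots> \<le> (\<Sum>i\<in>{i. i < length cs \<and> g (fst (cs ! i))}. snd (cs ! i))"
  proof (rule sum_mono2)
    show "set I \<subseteq> {i. i < length cs \<and> g (fst (cs ! i))}" using s I(3) by auto
    show "0 \<le> snd (cs ! b)" if "b \<in> {i. i < length cs \<and> g (fst (cs ! i))} - set I" for b
    proof -
      have m: "cs ! b \<in> set cs" using that by auto
      have "\<forall>p\<in>set cs. 0 \<le> snd p" using wf by auto
      then show ?thesis using m by blast
    qed
  qed simp
  also have "\<dots> = gsum g cs" by (simp add: gsum_idx)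
  finally show "Q (gsum g cs)" using Q I(2) by blast
next
  assume q: "Q (gsum g cs)"
  define I where "I = filter (\<lambda>i. g (fst (cs ! i))) [0..<length cs]"
  have "I \<in> set (subseqs [0..<length cs])" unfolding I_def by (rule filter_in_subseqs)
  moreover have "isum cs I = gsum g cs"
  proof -
    have "isum cs I = (\<Sum>i\<in>set I. snd (cs ! i))" by (rule isum_set) (simp add: I_def)
    also have "set I = {i. i < length cs \<and> g (fst (cs ! i))}" by (auto simp: I_def)
    finally show ?thesis by (simp add: gsum_idx)
  qed
  moreover have "\<forall>i\<in>set I. g (fst (cs ! i))" by (simp add: I_def)
  ultimately show "\<exists>I\<in>set (subseqs [0..<length cs]). Q (isum cs I) \<and> (\<forall>i\<in>set I. g (fst (cs ! i)))"
    using q by metis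
qed

definition mix :: "'a lit set \<Rightarrow> 'a lit set \<Rightarrow> 'a elem \<Rightarrow> bool" where
  "mix Y Z c = (case c of PosE l \<Rightarrow> l \<in> Y | NotE l \<Rightarrow> l \<notin> Z)"

definition ps :: "'a lit set \<Rightarrow> ('a elem \<times> real) list \<Rightarrow> real" where
  "ps Y cs = gsum (\<lambda>c. is_pos c \<and> esat Y c) cs"

definition ns :: "'a lit set \<Rightarrow> ('a elem \<times> real) list \<Rightarrow> real" where
  "ns Z cs = gsum (\<lambda>c. \<not> is_pos c \<and> esat Z c) cs"

lemma gsum_Cons: "gsum g ((c, w) # cs) = (if g c then w else 0) + gsum g cs"
  by (simp add: gsum_def)

lemma gsum_Nil: "gsum g [] = 0"
  by (simp add: gsum_def)

lemma gsum_mix: "gsum (mix Y Z) cs = ps Y cs + ns Z cs"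
proof (induction cs)
  case (Cons p cs)
  then show ?case
    by (cases p rule: prod.exhaust, rename_tac c w, case_tac c)
       (auto simp: gsum_Cons mix_def ps_def ns_def)
qed (simp add: gsum_Nil ps_def ns_def)

lemma mix_self: "mix Z Z = esat Z"
  by (rule ext) (auto simp: mix_def split: elem.splits)

lemma wsum_gsum: "wsum Z C = gsum (esat Z) (elems C)"
  by (simp add: wsum_def gsum_def)

lemma wsum_ps_ns: "wsum Z C = ps Z (elems C) + ns Z (elems C)"
  by (simp add: wsum_gsum gsum_mix[symmetric] mix_self)

lemma gsum_filter_pos: "gsum (esat Y) (filter (\<lambda>(c, w). is_pos c) cs) = ps Y cs"
  unfolding ps_def by (induction cs) (auto simp: gsum_Cons gsum_Nil)

lemma wsum_lower_reduct: "wsum Y (lower_reduct C Z) = ps Y (elems C)"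
  by (simp add: wsum_gsum lower_reduct_def gsum_filter_pos)

lemma ps_mono:
  assumes "Y \<subseteq> Z" "\<forall>(c, w)\<in>set cs. 0 \<le> w"
  shows "ps Y cs \<le> ps Z cs"
  using assms
proof (induction cs)
  case (Cons p cs)
  then show ?case
    by (cases p rule: prod.exhaust, rename_tac c w, case_tac c)
       (auto simp: gsum_Cons ps_def)
qed (simp add: gsum_Nil ps_def)

lemma ereal_minus_le: "L - ereal n \<le> ereal p \<longleftrightarrow> L \<le> ereal (p + n)"
  by (cases L) auto

lemma ns_gsum: "ns Z cs = gsum (\<lambda>c. \<not> is_pos c \<and> esat Z c) cs"
  by (simp add: ns_def)

lemma lower_reduct_ns:
  "lower (lower_reduct C Z) = lower C - ereal (ns Z (elems C))"
  by (simp add: lower_reduct_def ns_def gsum_def)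

lemma wcsat_lower_reduct:
  "wcsat Y (lower_reduct C Z) \<longleftrightarrow> lower C \<le> ereal (ps Y (elems C) + ns Z (elems C))"
  unfolding wcsat_def wsum_lower_reduct lower_reduct_ns
  by (simp add: ereal_minus_le lower_reduct_def)

lemma fsat_elem_form: "fsat Z (elem_form c) = esat Z c"
  by (cases c) auto

lemma fsat_freduct_elem_form: "fsat Y (freduct (elem_form c) Z) = mix Y Z c"
  by (cases c) (auto simp: mix_def)

lemma angle_elems:
  "fsat Y (angle (map (elem_form \<circ> fst) cs) P) \<longleftrightarrow>
     (\<exists>I\<in>set (subseqs [0..<length cs]). P I \<and> (\<forall>i\<in>set I. esat Y (fst (cs ! i))))"
  unfolding fsat_angle length_map
proof (rule bex_cong[OF refl])
  fix I assume "I \<in> set (subseqs [0..<length cs])"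
  then have "set I \<subseteq> {..<length cs}" by (rule subseqs_idx)
  then show "(P I \<and> (\<forall>i\<in>set I. fsat Y (map (elem_form \<circ> fst) cs ! i))) =
             (P I \<and> (\<forall>i\<in>set I. esat Y (fst (cs ! i))))"
    by (metis (no_types, lifting) lessThan_iff nth_map o_apply subsetD fsat_elem_form)
qed

lemma angle_elems_red:
  "fsat Y (freduct (angle (map (elem_form \<circ> fst) cs) P) Z) \<longleftrightarrow>
     (\<exists>I\<in>set (subseqs [0..<length cs]). P I \<and> (\<forall>i\<in>set I. mix Y Z (fst (cs ! i))))"
  unfolding fsat_freduct_angle length_map
proof (rule bex_cong[OF refl])
  fix I assume "I \<in> set (subseqs [0..<length cs])"
  then have "set I \<subseteq> {..<length cs}" by (rule subseqs_idx)
  then show "(P I \<and> (\<forall>i\<in>set I. fsat Y (freduct (map (elem_form \<circ> fst) cs ! i) Z))) =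
             (P I \<and> (\<forall>i\<in>set I. mix Y Z (fst (cs ! i))))"
    by (metis (no_types, lifting) lessThan_iff nth_map o_apply subsetD fsat_freduct_elem_form)
qed

lemma tr_ge_sat:
  assumes "\<forall>(c, w)\<in>set cs. 0 \<le> w"
  shows "fsat Y (tr_ge L cs) \<longleftrightarrow> L \<le> ereal (gsum (esat Y) cs)"
  unfolding tr_ge_def angle_elems
  by (rule core[OF assms, where Q="\<lambda>x. L \<le> ereal x"]) (auto intro: order_trans)

lemma tr_gt_sat:
  assumes "\<forall>(c, w)\<in>set cs. 0 \<le> w"
  shows "fsat Y (tr_gt L cs) \<longleftrightarrow> L < ereal (gsum (esat Y) cs)"
  unfolding tr_gt_def angle_elems
  by (rule core[OF assms, where Q="\<lambda>x. L < ereal x"]) (auto intro: less_le_trans)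

lemma tr_ge_red:
  assumes "\<forall>(c, w)\<in>set cs. 0 \<le> w"
  shows "fsat Y (freduct (tr_ge L cs) Z) \<longleftrightarrow> L \<le> ereal (gsum (mix Y Z) cs)"
  unfolding tr_ge_def angle_elems_red
  by (rule core[OF assms, where Q="\<lambda>x. L \<le> ereal x"]) (auto intro: order_trans)

lemma tr_wc_sat:
  assumes "wc_wf C"
  shows "fsat Z (tr_wc C) \<longleftrightarrow> wcsat Z C"
  using assms unfolding tr_wc_def wc_wf_def wcsat_def
  by (auto simp: tr_ge_sat tr_gt_sat wsum_gsum not_less)

lemma tr_wc_red:
  assumes "wc_wf C"
  shows "fsat Y (freduct (tr_wc C) Z) \<longleftrightarrow> ereal (wsum Z C) \<le> upper C \<and> wcsat Y (lower_reduct C Z)"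
  using assms unfolding tr_wc_def wc_wf_def
  by (auto simp: tr_ge_red tr_gt_sat wsum_gsum not_less gsum_mix wcsat_lower_reduct)

definition rule_wf :: "'a wrule \<Rightarrow> bool" where
  "rule_wf r \<longleftrightarrow> wc_wf (fst r) \<and> (\<forall>C\<in>set (snd r). wc_wf C)"

lemma wprog_wf_rule: "wprog_wf \<Omega> \<longleftrightarrow> (\<forall>r\<in>\<Omega>. rule_wf r)"
  by (auto simp: wprog_wf_def rule_wf_def)

lemma tr_head_sat: "wc_wf C0 \<Longrightarrow> fsat Z (fst (tr_rule (C0, Bs))) \<longleftrightarrow> wcsat Z C0"
  by (simp add: tr_rule_def fsat_conj_list tr_wc_sat)

lemma tr_body_sat: "\<forall>C\<in>set Bs. wc_wf C \<Longrightarrow> fsat Z (snd (tr_rule (C0, Bs))) \<longleftrightarrow> (\<forall>C\<in>set Bs. wcsat Z C)"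
  by (simp add: tr_rule_def fsat_conj_list tr_wc_sat)

lemma tr_head_red: "wc_wf C0 \<Longrightarrow> fsat Y (freduct (fst (tr_rule (C0, Bs))) Z) \<longleftrightarrow>
   (\<forall>l\<in>set (pos_lits C0). l \<in> Y \<or> l \<notin> Z) \<and> ereal (wsum Z C0) \<le> upper C0 \<and> wcsat Y (lower_reduct C0 Z)"
  by (simp add: tr_rule_def fsat_conj_list freduct_conj_list tr_wc_red) blast

lemma tr_body_red: "\<forall>C\<in>set Bs. wc_wf C \<Longrightarrow> fsat Y (freduct (snd (tr_rule (C0, Bs))) Z) \<longleftrightarrow>
   (\<forall>C\<in>set Bs. ereal (wsum Z C) \<le> upper C \<and> wcsat Y (lower_reduct C Z))"
  by (simp add: tr_rule_def fsat_conj_list freduct_conj_list tr_wc_red)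

lemma wcsat_lit_wc: "wcsat Y (lit_wc l) \<longleftrightarrow> l \<in> Y"
  by (simp add: wcsat_def wsum_def lit_wc_def)

lemma wsat_wrule_reduct: "wsat Y (wrule_reduct (C0, Bs) Z) \<longleftrightarrow>
  ((\<forall>C\<in>set Bs. ereal (wsum Z C) \<le> upper C \<and> wcsat Y (lower_reduct C Z)) \<longrightarrow>
     (\<forall>l\<in>set (pos_lits C0). l \<in> Z \<longrightarrow> l \<in> Y))" (is "?L \<longleftrightarrow> (?B \<longrightarrow> ?H)")
proof
  assume L: ?L
  show "?B \<longrightarrow> ?H"
  proof (intro impI ballI)
    fix l assume b: ?B and l: "l \<in> set (pos_lits C0)" "l \<in> Z"
    have "(lit_wc l, map (\<lambda>C. lower_reduct C Z) Bs) \<in> wrule_reduct (C0, Bs) Z"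
      using b l by (auto simp: wrule_reduct_def)
    moreover have "\<forall>C\<in>set (map (\<lambda>C. lower_reduct C Z) Bs). wcsat Y C" using b by auto
    ultimately have "wcsat Y (lit_wc l)" using L unfolding wsat_def by blast
    then show "l \<in> Y" by (simp add: wcsat_lit_wc)
  qed
next
  assume R: "?B \<longrightarrow> ?H"
  show ?L unfolding wsat_def wrule_reduct_def using R by (auto simp: wcsat_lit_wc)
qed

lemma set_pos_lits: "set (pos_lits C) = {l. \<exists>w. (PosE l, w) \<in> set (elems C)}"
  by (auto simp: pos_lits_def)

lemma ps_eq:
  assumes "\<forall>l w. (PosE l, w) \<in> set cs \<longrightarrow> l \<in> Z \<longrightarrow> l \<in> Y" "Y \<subseteq> Z"
  shows "ps Y cs = ps Z cs"
  using assms
proof (induction cs)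
  case (Cons p cs)
  then show ?case
    by (cases p rule: prod.exhaust, rename_tac c w, case_tac c)
       (auto simp: gsum_Cons ps_def)
qed (simp add: gsum_Nil ps_def)

lemma wcsat_from_reduct:
  assumes "wc_wf C" "Y \<subseteq> Z" "wcsat Y (lower_reduct C Z)" "ereal (wsum Z C) \<le> upper C"
  shows "wcsat Z C"
proof -
  have "ps Y (elems C) \<le> ps Z (elems C)" using assms(1,2) ps_mono unfolding wc_wf_def by blast
  then have "lower C \<le> ereal (ps Z (elems C) + ns Z (elems C))"
    using assms(3) unfolding wcsat_lower_reduct by (meson add_right_mono ereal_less_eq(3) order_trans)
  then show ?thesis using assms(4) by (simp add: wcsat_def wsum_ps_ns)
qed

lemma rule_red_equiv:
  assumes wf: "rule_wf (C0, Bs)" and YZ: "Y \<subseteq> Z"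
    and Zr: "(\<forall>C\<in>set Bs. wcsat Z C) \<longrightarrow> wcsat Z C0"
  shows "wsat Y (wrule_reduct (C0, Bs) Z) \<longleftrightarrow>
    (fsat Y (freduct (snd (tr_rule (C0, Bs))) Z) \<longrightarrow> fsat Y (freduct (fst (tr_rule (C0, Bs))) Z))"
proof -
  have w0: "wc_wf C0" and wB: "\<forall>C\<in>set Bs. wc_wf C" using wf by (auto simp: rule_wf_def)
  let ?B = "\<forall>C\<in>set Bs. ereal (wsum Z C) \<le> upper C \<and> wcsat Y (lower_reduct C Z)"
  show ?thesis
    unfolding wsat_wrule_reduct tr_body_red[OF wB] tr_head_red[OF w0]
  proof (intro iffI impI)
    assume h: "?B \<longrightarrow> (\<forall>l\<in>set (pos_lits C0). l \<in> Z \<longrightarrow> l \<in> Y)" and b: ?B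
    have pl: "\<forall>l\<in>set (pos_lits C0). l \<in> Z \<longrightarrow> l \<in> Y" using h b by blast
    have "\<forall>C\<in>set Bs. wcsat Z C" using b wB YZ wcsat_from_reduct by blast
    then have z0: "wcsat Z C0" using Zr by blast
    have "ps Y (elems C0) = ps Z (elems C0)"
      by (rule ps_eq[OF _ YZ]) (use pl in \<open>auto simp: set_pos_lits\<close>)
    then have "wcsat Y (lower_reduct C0 Z)"
      using z0 unfolding wcsat_lower_reduct by (simp add: wcsat_def wsum_ps_ns)
    then show "(\<forall>l\<in>set (pos_lits C0). l \<in> Y \<or> l \<notin> Z) \<and> ereal (wsum Z C0) \<le> upper C0 \<and>
        wcsat Y (lower_reduct C0 Z)" using pl z0 by (auto simp: wcsat_def)
  next
    assume h: "?B \<longrightarrow> (\<forall>l\<in>set (pos_lits C0). l \<in> Y \<or> l \<notin> Z) \<and> ereal (wsum Z C0) \<le> upper C0 \<and>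
        wcsat Y (lower_reduct C0 Z)" and b: ?B
    then show "\<forall>l\<in>set (pos_lits C0). l \<in> Z \<longrightarrow> l \<in> Y" by blast
  qed
qed

lemma nsat_tr:
  assumes "wprog_wf \<Omega>"
  shows "nsat Z (tr_prog \<Omega>) \<longleftrightarrow> wsat Z \<Omega>"
proof -
  have "nsat Z (tr_prog \<Omega>) \<longleftrightarrow> (\<forall>r\<in>\<Omega>. fsat Z (snd (tr_rule r)) \<longrightarrow> fsat Z (fst (tr_rule r)))"
    by (auto simp: nsat_def tr_prog_def split: prod.splits) (metis prod.collapse)
  also have "\<dots> \<longleftrightarrow> (\<forall>r\<in>\<Omega>. (\<forall>C\<in>set (snd r). wcsat Z C) \<longrightarrow> wcsat Z (fst r))"
  proof (rule ball_cong[OF refl])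
    fix r assume "r \<in> \<Omega>"
    then have "rule_wf r" using assms by (simp add: wprog_wf_rule)
    then show "(fsat Z (snd (tr_rule r)) \<longrightarrow> fsat Z (fst (tr_rule r))) =
        ((\<forall>C\<in>set (snd r). wcsat Z C) \<longrightarrow> wcsat Z (fst r))"
      by (cases r) (simp add: rule_wf_def tr_head_sat tr_body_sat)
  qed
  also have "\<dots> \<longleftrightarrow> wsat Z \<Omega>" by (auto simp: wsat_def)
  finally show ?thesis .
qed

lemma nsat_red_tr:
  assumes "wprog_wf \<Omega>" "Y \<subseteq> Z" "wsat Z \<Omega>"
  shows "nsat Y (nreduct (tr_prog \<Omega>) Z) \<longleftrightarrow> wsat Y (wreduct \<Omega> Z)"
proof -
  have "nsat Y (nreduct (tr_prog \<Omega>) Z) \<longleftrightarrow>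
     (\<forall>r\<in>\<Omega>. fsat Y (freduct (snd (tr_rule r)) Z) \<longrightarrow> fsat Y (freduct (fst (tr_rule r)) Z))"
    by (auto simp: nsat_def tr_prog_def nreduct_def split: prod.splits) (metis prod.collapse)
  also have "\<dots> \<longleftrightarrow> (\<forall>r\<in>\<Omega>. wsat Y (wrule_reduct r Z))"
  proof (rule ball_cong[OF refl])
    fix r assume r: "r \<in> \<Omega>"
    then have "rule_wf r" using assms by (simp add: wprog_wf_rule)
    moreover have "(\<forall>C\<in>set (snd r). wcsat Z C) \<longrightarrow> wcsat Z (fst r)"
      using assms(3) r by (auto simp: wsat_def)
    ultimately show "(fsat Y (freduct (snd (tr_rule r)) Z) \<longrightarrow> fsat Y (freduct (fst (tr_rule r)) Z)) =
        wsat Y (wrule_reduct r Z)"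
      using rule_red_equiv[OF _ assms(2)] by (cases r) auto
  qed
  also have "\<dots> \<longleftrightarrow> wsat Y (wreduct \<Omega> Z)" by (auto simp: wsat_def wreduct_def)
  finally show ?thesis .
qed

lemma wcsat_lower_reduct_mono:
  assumes "wc_wf C" "X \<subseteq> X'" "wcsat X (lower_reduct C Z)"
  shows "wcsat X' (lower_reduct C Z)"
proof -
  have "ps X (elems C) \<le> ps X' (elems C)" using assms(1,2) ps_mono unfolding wc_wf_def by blast
  then show ?thesis using assms(3) unfolding wcsat_lower_reduct
    by (meson add_right_mono ereal_less_eq(3) order_trans)
qed

lemma wreduct_shape:
  assumes "wprog_wf \<Omega>" "(H, Ds) \<in> wreduct \<Omega> Z"
  shows "\<exists>l. H = lit_wc l \<and> (\<forall>D\<in>set Ds. \<exists>C. wc_wf C \<and> D = lower_reduct C Z)"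
  using assms by (auto simp: wreduct_def wrule_reduct_def wprog_wf_def split: if_splits) force

lemma cl_least:
  fixes Z :: "'a lit set"
  assumes "wprog_wf \<Omega>"
  defines "R \<equiv> wreduct \<Omega> Z"
  shows "wsat (cl R) R \<and> (\<forall>Y. wsat Y R \<longrightarrow> cl R \<subseteq> Y)"
proof -
  define M where "M = \<Inter>{X. wsat X R}"
  have least: "\<forall>Y. wsat Y R \<longrightarrow> M \<subseteq> Y" unfolding M_def by blast
  have sat: "wsat M R"
    unfolding wsat_def
  proof (intro ballI impI, clarify)
    fix H Ds assume r: "(H, Ds) \<in> R" and b: "\<forall>C\<in>set Ds. wcsat M C"
    obtain l where H: "H = lit_wc l" and Ds: "\<forall>D\<in>set Ds. \<exists>C. wc_wf C \<and> D = lower_reduct C Z"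
      using wreduct_shape[OF assms(1)] r unfolding R_def by blast
    have "l \<in> X" if X: "wsat X R" for X
    proof -
      have "M \<subseteq> X" using least X by blast
      then have "\<forall>C\<in>set Ds. wcsat X C" using b Ds wcsat_lower_reduct_mono by metis
      then have "wcsat X H" using X r unfolding wsat_def by blast
      then show ?thesis by (simp add: H wcsat_lit_wc)
    qed
    then have "l \<in> M" unfolding M_def by blast
    then show "wcsat M H" by (simp add: H wcsat_lit_wc)
  qed
  have "cl R = M" unfolding cl_def
  proof (rule the_equality)
    show "wsat M R \<and> (\<forall>Y. wsat Y R \<longrightarrow> M \<subseteq> Y)" using sat least by blast
    fix X assume "wsat X R \<and> (\<forall>Y. wsat Y R \<longrightarrow> X \<subseteq> Y)"
    then show "X = M" using sat least by blast
  qed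
  then show ?thesis using sat least by simp
qed

lemma cl_iff:
  assumes "wprog_wf \<Omega>"
  shows "cl (wreduct \<Omega> Z) = Z \<longleftrightarrow>
     wsat Z (wreduct \<Omega> Z) \<and> (\<forall>Y. Y \<subseteq> Z \<and> wsat Y (wreduct \<Omega> Z) \<longrightarrow> Y = Z)"
proof -
  let ?R = "wreduct \<Omega> Z"
  have c1: "wsat (cl ?R) ?R" and c2: "\<And>Y. wsat Y ?R \<Longrightarrow> cl ?R \<subseteq> Y"
    using cl_least[OF assms, where Z=Z] by auto
  show ?thesis
  proof
    assume e: "cl ?R = Z"
    show "wsat Z ?R \<and> (\<forall>Y. Y \<subseteq> Z \<and> wsat Y ?R \<longrightarrow> Y = Z)"
    proof (intro conjI allI impI)
      show "wsat Z ?R" using c1 e by simp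
      fix Y assume "Y \<subseteq> Z \<and> wsat Y ?R"
      then show "Y = Z" using c2[of Y] e by auto
    qed
  next
    assume h: "wsat Z ?R \<and> (\<forall>Y. Y \<subseteq> Z \<and> wsat Y ?R \<longrightarrow> Y = Z)"
    then have "cl ?R \<subseteq> Z" using c2 by blast
    then show "cl ?R = Z" using h c1 by blast
  qed
qed

lemma wsat_reduct_self: "wsat Z (wreduct \<Omega> Z)"
  by (auto simp: wsat_def wreduct_def wrule_reduct_def wcsat_lit_wc split: if_splits)

definition htw :: "'a wprog \<Rightarrow> 'a lit set \<Rightarrow> 'a lit set \<Rightarrow> bool" where
  "htw \<Omega> Y Z \<longleftrightarrow> Y \<subseteq> Z \<and> consistent Z \<and> wsat Z \<Omega> \<and> wsat Y (wreduct \<Omega> Z)"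

definition htn :: "'a nprog \<Rightarrow> 'a lit set \<Rightarrow> 'a lit set \<Rightarrow> bool" where
  "htn \<Pi> Y Z \<longleftrightarrow> Y \<subseteq> Z \<and> consistent Z \<and> nsat Z \<Pi> \<and> nsat Y (nreduct \<Pi> Z)"

lemma asw:
  assumes "wprog_wf \<Omega>"
  shows "w_answer_set \<Omega> Z \<longleftrightarrow> htw \<Omega> Z Z \<and> (\<forall>Y. htw \<Omega> Y Z \<longrightarrow> Y = Z)"
  unfolding w_answer_set_def cl_iff[OF assms] htw_def by auto

lemma nsat_reduct_self: "nsat Z (nreduct \<Pi> Z) \<longleftrightarrow> nsat Z \<Pi>"
  by (auto simp: nsat_def nreduct_def fsat_freduct_self)

lemma consistent_subset: "consistent Z \<Longrightarrow> Y \<subseteq> Z \<Longrightarrow> consistent Y"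
  by (auto simp: consistent_def)

lemma asn:
  "n_answer_set \<Pi> Z \<longleftrightarrow> htn \<Pi> Z Z \<and> (\<forall>Y. htn \<Pi> Y Z \<longrightarrow> Y = Z)"
  unfolding n_answer_set_def nf_answer_set_def htn_def nsat_reduct_self
  by (auto intro: consistent_subset)

lemma htA:
  assumes "wprog_wf \<Omega>"
  shows "htw \<Omega> Y Z \<longleftrightarrow> htn (tr_prog \<Omega>) Y Z"
  unfolding htw_def htn_def using nsat_tr[OF assms] nsat_red_tr[OF assms] by blast

lemma wsat_Un: "wsat Z (A \<union> B) \<longleftrightarrow> wsat Z A \<and> wsat Z B"
  unfolding wsat_def by blast

lemma nsat_Un: "nsat Z (A \<union> B) \<longleftrightarrow> nsat Z A \<and> nsat Z B"
  unfolding nsat_def by blast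

lemma wreduct_Un: "wreduct (A \<union> B) Z = wreduct A Z \<union> wreduct B Z"
  by (simp add: wreduct_def)

lemma nreduct_Un: "nreduct (A \<union> B) Z = nreduct A Z \<union> nreduct B Z"
  by (simp add: nreduct_def image_Un)

lemma htw_Un: "htw (A \<union> B) Y Z \<longleftrightarrow> htw A Y Z \<and> htw B Y Z"
  by (simp add: htw_def wsat_Un wreduct_Un) blast

lemma htn_Un: "htn (A \<union> B) Y Z \<longleftrightarrow> htn A Y Z \<and> htn B Y Z"
  by (simp add: htn_def nsat_Un nreduct_Un) blast

lemma tr_prog_Un: "tr_prog (A \<union> B) = tr_prog A \<union> tr_prog B"
  by (simp add: tr_prog_def image_Un)

lemma wprog_wf_Un: "wprog_wf (A \<union> B) \<longleftrightarrow> wprog_wf A \<and> wprog_wf B"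
  by (auto simp: wprog_wf_def)

lemma as_equiv:
  assumes "wprog_wf \<Omega>"
  shows "w_answer_set \<Omega> Z \<longleftrightarrow> n_answer_set (tr_prog \<Omega>) Z"
  unfolding asw[OF assms] asn htA[OF assms] ..

lemma upper_lit_wc: "upper (lit_wc l) = \<infinity>"
  by (simp add: lit_wc_def)

lemma pos_lits_lit_wc: "pos_lits (lit_wc l) = [l]"
  by (simp add: pos_lits_def lit_wc_def)

lemma wcsat_lower_reduct_lit: "wcsat W (lower_reduct (lit_wc l) Z) \<longleftrightarrow> l \<in> W"
  by (simp add: wcsat_lower_reduct lit_wc_def ps_def ns_def gsum_Cons gsum_Nil)

lemma wrule_reduct_fact: "wrule_reduct (lit_wc l, []) Z = (if l \<in> Z then {(lit_wc l, [])} else {})"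
  by (auto simp: wrule_reduct_def pos_lits_lit_wc)

lemma wrule_reduct_unary:
  "wrule_reduct (lit_wc l, [lit_wc l']) Z = (if l \<in> Z then {(lit_wc l, [lower_reduct (lit_wc l') Z])} else {})"
  by (auto simp: wrule_reduct_def pos_lits_lit_wc upper_lit_wc)

lemma wsat_wreduct: "wsat W (wreduct \<Omega> Z) \<longleftrightarrow> (\<forall>r\<in>\<Omega>. wsat W (wrule_reduct r Z))"
  unfolding wsat_def wreduct_def by blast

lemma wsat_single: "wsat W {(H, Ds)} \<longleftrightarrow> ((\<forall>D\<in>set Ds. wcsat W D) \<longrightarrow> wcsat W H)"
  by (simp add: wsat_def)

lemma wsat_empty: "wsat W {}"
  by (simp add: wsat_def)

lemma w_se_sym: "w_strongly_equiv A B \<Longrightarrow> w_strongly_equiv B A"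
  by (simp add: w_strongly_equiv_def)

lemma K:
  assumes wf1: "wprog_wf \<Omega>1" and wf2: "wprog_wf \<Omega>2"
    and se: "w_strongly_equiv \<Omega>1 \<Omega>2" and h1: "htw \<Omega>1 Y Z"
  shows "htw \<Omega>2 Y Z"
proof (rule ccontr)
  assume n: "\<not> htw \<Omega>2 Y Z"
  have YZ: "Y \<subseteq> Z" and cons: "consistent Z" and sZ: "wsat Z \<Omega>1" using h1 by (auto simp: htw_def)
  have h11: "htw \<Omega>1 Z Z" using cons sZ wsat_reduct_self by (auto simp: htw_def)
  show False
  proof (cases "htw \<Omega>2 Z Z")
    case False
    define F :: "'a wprog" where "F = {(lit_wc l, []) | l. l \<in> Z}"
    have wfF: "wprog_wf F" by (auto simp: F_def wprog_wf_def wc_wf_def lit_wc_def)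
    have "wsat Z F" by (auto simp: F_def wsat_def wcsat_lit_wc)
    then have FZ: "htw F Z Z" using cons wsat_reduct_self[of Z F] by (auto simp: htw_def)
    have Fmin: "Z \<subseteq> W" if "htw F W Z" for W
    proof
      fix l assume l: "l \<in> Z"
      have "wsat W (wrule_reduct (lit_wc l, []) Z)"
        using that l unfolding htw_def wsat_wreduct F_def by blast
      then show "l \<in> W" using l by (simp add: wrule_reduct_fact wsat_single wcsat_lit_wc)
    qed
    have a1: "w_answer_set (\<Omega>1 \<union> F) Z"
      unfolding asw[OF wprog_wf_Un[THEN iffD2, OF conjI[OF wf1 wfF]]] htw_Un
      using h11 FZ Fmin by (auto simp: htw_def)
    have a2: "\<not> w_answer_set (\<Omega>2 \<union> F) Z"
      unfolding asw[OF wprog_wf_Un[THEN iffD2, OF conjI[OF wf2 wfF]]] htw_Un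
      using False by blast
    show False using se wfF a1 a2 unfolding w_strongly_equiv_def by blast
  next
    case True
    have YneZ: "Y \<noteq> Z" using n True by blast
    define F :: "'a wprog" where "F = {(lit_wc l, []) | l. l \<in> Y} \<union>
       {(lit_wc l, [lit_wc l']) | l l'. l \<in> Z - Y \<and> l' \<in> Z - Y}"
    have wfF: "wprog_wf F" by (auto simp: F_def wprog_wf_def wc_wf_def lit_wc_def)
    have ballF: "(\<forall>r\<in>F. P r) \<longleftrightarrow> (\<forall>l\<in>Y. P (lit_wc l, [])) \<and>
        (\<forall>l l'. l \<in> Z - Y \<and> l' \<in> Z - Y \<longrightarrow> P (lit_wc l, [lit_wc l']))" for P
      unfolding F_def by blast
    have sFZ: "wsat Z F" using YZ by (auto simp: F_def wsat_def wcsat_lit_wc)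
    have redF: "wsat W (wreduct F Z) \<longleftrightarrow>
        Y \<subseteq> W \<and> (\<forall>l l'. l \<in> Z - Y \<and> l' \<in> Z - Y \<and> l' \<in> W \<longrightarrow> l \<in> W)" for W
    proof -
      have fa: "wsat W (wrule_reduct (lit_wc l, []) Z) \<longleftrightarrow> l \<in> W" if "l \<in> Y" for l
        using that YZ by (auto simp: wrule_reduct_fact wsat_single wcsat_lit_wc)
      have ru: "wsat W (wrule_reduct (lit_wc l, [lit_wc l']) Z) \<longleftrightarrow> (l' \<in> W \<longrightarrow> l \<in> W)"
        if "l \<in> Z - Y" for l l'
        using that by (auto simp: wrule_reduct_unary wsat_single wcsat_lit_wc wcsat_lower_reduct_lit)
      have "wsat W (wreduct F Z) \<longleftrightarrow> (\<forall>l\<in>Y. wsat W (wrule_reduct (lit_wc l, []) Z)) \<and>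
        (\<forall>l l'. l \<in> Z - Y \<and> l' \<in> Z - Y \<longrightarrow> wsat W (wrule_reduct (lit_wc l, [lit_wc l']) Z))"
        unfolding wsat_wreduct by (rule ballF)
      also have "\<dots> \<longleftrightarrow> Y \<subseteq> W \<and> (\<forall>l l'. l \<in> Z - Y \<and> l' \<in> Z - Y \<and> l' \<in> W \<longrightarrow> l \<in> W)"
        using fa ru by blast
      finally show ?thesis .
    qed
    have FZ: "htw F Z Z" using cons sFZ wsat_reduct_self[of Z F] by (auto simp: htw_def)
    have FY: "htw F Y Z" using cons sFZ YZ redF[of Y] by (auto simp: htw_def)
    have a1: "\<not> w_answer_set (\<Omega>1 \<union> F) Z"
      unfolding asw[OF wprog_wf_Un[THEN iffD2, OF conjI[OF wf1 wfF]]] htw_Un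
      using h1 FY YneZ by blast
    have a2: "w_answer_set (\<Omega>2 \<union> F) Z"
      unfolding asw[OF wprog_wf_Un[THEN iffD2, OF conjI[OF wf2 wfF]]] htw_Un
    proof (intro conjI allI impI)
      show "htw \<Omega>2 Z Z" by (rule True)
      show "htw F Z Z" by (rule FZ)
      fix W assume W: "htw \<Omega>2 W Z \<and> htw F W Z"
      then have WZ: "W \<subseteq> Z" and YW: "Y \<subseteq> W"
        and cl: "\<And>l l'. l \<in> Z - Y \<Longrightarrow> l' \<in> Z - Y \<Longrightarrow> l' \<in> W \<Longrightarrow> l \<in> W"
        using redF[of W] by (auto simp: htw_def)
      have "W \<noteq> Y" using W n by blast
      then obtain l' where l': "l' \<in> W" "l' \<notin> Y" using YW by blast
      have "Z \<subseteq> W"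
      proof
        fix l assume "l \<in> Z"
        then show "l \<in> W" using YW cl[of l l'] l' WZ by blast
      qed
      then show "W = Z" using WZ by blast
    qed
    show False using se wfF a1 a2 unfolding w_strongly_equiv_def by blast
  qed
qed

theorem proposition4:
  fixes \<Omega>1 \<Omega>2 :: "'a wprog"
  assumes "wprog_wf \<Omega>1" and "wprog_wf \<Omega>2"
  shows "w_strongly_equiv \<Omega>1 \<Omega>2 \<longleftrightarrow> n_strongly_equiv (tr_prog \<Omega>1) (tr_prog \<Omega>2)"
proof
  assume se: "w_strongly_equiv \<Omega>1 \<Omega>2"
  have eq: "htn (tr_prog \<Omega>1) = htn (tr_prog \<Omega>2)"
  proof (intro ext)
    fix Y Z
    show "htn (tr_prog \<Omega>1) Y Z = htn (tr_prog \<Omega>2) Y Z"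
      unfolding htA[OF assms(1), symmetric] htA[OF assms(2), symmetric]
      using K[OF assms se] K[OF assms(2,1) w_se_sym[OF se]] by blast
  qed
  show "n_strongly_equiv (tr_prog \<Omega>1) (tr_prog \<Omega>2)"
    unfolding n_strongly_equiv_def asn htn_Un eq by simp
next
  assume se: "n_strongly_equiv (tr_prog \<Omega>1) (tr_prog \<Omega>2)"
  show "w_strongly_equiv \<Omega>1 \<Omega>2"
    unfolding w_strongly_equiv_def
  proof (intro allI impI)
    fix \<Omega> :: "'a wprog" and Z assume wf: "wprog_wf \<Omega>"
    have "w_answer_set (\<Omega>1 \<union> \<Omega>) Z \<longleftrightarrow> n_answer_set (tr_prog \<Omega>1 \<union> tr_prog \<Omega>) Z"
      using as_equiv[of "\<Omega>1 \<union> \<Omega>"] assms(1) wf by (simp add: wprog_wf_Un tr_prog_Un)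
    also have "\<dots> \<longleftrightarrow> n_answer_set (tr_prog \<Omega>2 \<union> tr_prog \<Omega>) Z"
      using se unfolding n_strongly_equiv_def by blast
    also have "\<dots> \<longleftrightarrow> w_answer_set (\<Omega>2 \<union> \<Omega>) Z"
      using as_equiv[of "\<Omega>2 \<union> \<Omega>"] assms(2) wf by (simp add: wprog_wf_Un tr_prog_Un)
    finally show "w_answer_set (\<Omega>1 \<union> \<Omega>) Z \<longleftrightarrow> w_answer_set (\<Omega>2 \<union> \<Omega>) Z" .
  qed
qed

end
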